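(* For each of the following families $F_{\mathbf c,\mathbf s}:\mathbb{R}^2\to\mathbb{R}$ (real parameters $\mathbf c$, $\mathbf s=(s_1,s_2)\in\mathbb{R}^2$, any fixed choice of the signs $\pm$), with associated integer $n$: $A_n$ ($n\ge2$): $F=\pm x_1^{n+1}\pm x_2^2+c_{n-1}x_1^{n-1}+\cdots+c_3x_1^3+s_2x_1^2-s_1x_1\pm s_2x_2$; $D_n$ ($n\ge4$): $F=x_1^2x_2\pm x_2^{n-1}+c_{n-2}x_2^{n-2}+\cdots+c_2x_2^2-s_2x_2-s_1x_1$; $E_6$ ($n=6$): $F=x_1^3\pm x_2^4+c_3x_1x_2^2+c_2x_2^2+c_1x_1x_2-s_2x_2-s_1x_1$; $E_7$ ($n=7$): $F=x_1^3+x_1x_2^3+c_4x_2^4+c_3x_2^3+c_2x_2^2+c_1x_1x_2-s_2x_2-s_1x_1$; $E_8$ ($n=8$): $F=x_1^3+x_2^5+c_5x_1x_2^3+c_4x_1x_2^2+c_3x_2^3+c_2x_2^2+c_1x_1x_2-s_2x_2-s_1x_1$; the following holds: if, for given parameter values, $F_{\mathbf c,\mathbf s}$ has exactly $n$ real critical points $\mathbf x_1,\dots,\mathbf x_n$ and each is nondegenerate ($\det[\mathrm{Hess}\,F_{\mathbf c,\mathbf s}](\mathbf x_i)\ne0$), then $\sum_{i=1}^n\mathfrak M_i=0$, where $\mathfrak M_i=1/\det[\mathrm{Hess}\,F_{\mathbf c,\mathbf s}](\mathbf x_i)$.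
   Context: These are Arnold's normal forms of generating families for the $A,D,E$ classification of stable simple Lagrangian map-germs. Critical points of $F_{\mathbf c,\mathbf s}$ (gradient in $\mathbf x=(x_1,x_2)$) are the lensed images of the source $\mathbf s$, and $\mathfrak M_i$, the reciprocal of the Gaussian curvature $\det[\mathrm{Hess}\,F_{\mathbf c,\mathbf s}]$ of the graph at the critical point, is the signed magnification. The set of such $\mathbf s$ (for fixed $\mathbf c$) is the $n$-image region. *)

theory Defs
  imports "HOL-Analysis.Analysis"
begin

definition pd1 :: "(real \<times> real \<Rightarrow> real) \<Rightarrow> real \<times> real \<Rightarrow> real" where
  "pd1 F p = deriv (\<lambda>t. F (t, snd p)) (fst p)"

definition pd2 :: "(real \<times> real \<Rightarrow> real) \<Rightarrow> real \<times> real \<Rightarrow> real" where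
  "pd2 F p = deriv (\<lambda>t. F (fst p, t)) (snd p)"

definition crit_points :: "(real \<times> real \<Rightarrow> real) \<Rightarrow> (real \<times> real) set" where
  "crit_points F = {p. pd1 F p = 0 \<and> pd2 F p = 0}"

definition hess_det :: "(real \<times> real \<Rightarrow> real) \<Rightarrow> real \<times> real \<Rightarrow> real" where
  "hess_det F p = pd1 (pd1 F) p * pd2 (pd2 F) p - pd2 (pd1 F) p * pd1 (pd2 F) p"

definition magnification :: "(real \<times> real \<Rightarrow> real) \<Rightarrow> real \<times> real \<Rightarrow> real" where
  "magnification F p = 1 / hess_det F p"

text \<open>The normal forms. Signs are reals in {1,-1}; parameters c are indexed c k.\<close>

definition A_family :: "nat \<Rightarrow> real \<Rightarrow> real \<Rightarrow> real \<Rightarrow> (nat \<Rightarrow> real) \<Rightarrow> real \<Rightarrow> real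
    \<Rightarrow> real \<times> real \<Rightarrow> real" where
  "A_family n e1 e2 e3 c s1 s2 = (\<lambda>(x1, x2).
     e1 * x1 ^ (n + 1) + e2 * x2 ^ 2 + (\<Sum>k = 3..n - 1. c k * x1 ^ k)
     + s2 * x1 ^ 2 - s1 * x1 + e3 * s2 * x2)"

definition D_family :: "nat \<Rightarrow> real \<Rightarrow> (nat \<Rightarrow> real) \<Rightarrow> real \<Rightarrow> real
    \<Rightarrow> real \<times> real \<Rightarrow> real" where
  "D_family n e c s1 s2 = (\<lambda>(x1, x2).
     x1 ^ 2 * x2 + e * x2 ^ (n - 1) + (\<Sum>k = 2..n - 2. c k * x2 ^ k)
     - s2 * x2 - s1 * x1)"

definition E6_family :: "real \<Rightarrow> (nat \<Rightarrow> real) \<Rightarrow> real \<Rightarrow> real \<Rightarrow> real \<times> real \<Rightarrow> real" where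
  "E6_family e c s1 s2 = (\<lambda>(x1, x2).
     x1 ^ 3 + e * x2 ^ 4 + c 3 * x1 * x2 ^ 2 + c 2 * x2 ^ 2 + c 1 * x1 * x2
     - s2 * x2 - s1 * x1)"

definition E7_family :: "(nat \<Rightarrow> real) \<Rightarrow> real \<Rightarrow> real \<Rightarrow> real \<times> real \<Rightarrow> real" where
  "E7_family c s1 s2 = (\<lambda>(x1, x2).
     x1 ^ 3 + x1 * x2 ^ 3 + c 4 * x2 ^ 4 + c 3 * x2 ^ 3 + c 2 * x2 ^ 2 + c 1 * x1 * x2
     - s2 * x2 - s1 * x1)"

definition E8_family :: "(nat \<Rightarrow> real) \<Rightarrow> real \<Rightarrow> real \<Rightarrow> real \<times> real \<Rightarrow> real" where
  "E8_family c s1 s2 = (\<lambda>(x1, x2).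
     x1 ^ 3 + x2 ^ 5 + c 5 * x1 * x2 ^ 3 + c 4 * x1 * x2 ^ 2 + c 3 * x2 ^ 3
     + c 2 * x2 ^ 2 + c 1 * x1 * x2 - s2 * x2 - s1 * x1)"

definition ADE_family :: "(real \<times> real \<Rightarrow> real) \<Rightarrow> nat \<Rightarrow> bool" where
  "ADE_family F n \<longleftrightarrow>
     (\<exists>e1 e2 e3 c s1 s2. n \<ge> 2 \<and> e1 \<in> {1, -1} \<and> e2 \<in> {1, -1} \<and> e3 \<in> {1, -1}
        \<and> F = A_family n e1 e2 e3 c s1 s2)
   \<or> (\<exists>e c s1 s2. n \<ge> 4 \<and> e \<in> {1, -1} \<and> F = D_family n e c s1 s2)
   \<or> (\<exists>e c s1 s2. n = 6 \<and> e \<in> {1, -1} \<and> F = E6_family e c s1 s2)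
   \<or> (\<exists>c s1 s2. n = 7 \<and> F = E7_family c s1 s2)
   \<or> (\<exists>c s1 s2. n = 8 \<and> F = E8_family c s1 s2)"

end

theory Submission
  imports Defs "HOL-Computational_Algebra.Polynomial"
begin


lemma prod_lin_dvd:
  fixes T :: "real poly"
  assumes "finite S" "\<forall>r\<in>S. poly T r = 0"
  shows "(\<Prod>s\<in>S. [:-s,1:]) dvd T"
  using assms
proof (induction S arbitrary: T rule: finite_induct)
  case empty then show ?case by simp
next
  case (insert a S)
  then have "(\<Prod>s\<in>S. [:-s,1:]) dvd T" by auto
  then obtain Q where Q: "T = (\<Prod>s\<in>S. [:-s,1:]) * Q" by (auto simp: dvd_def)
  have "poly (\<Prod>s\<in>S. [:-s,1:]) a \<noteq> 0"
    using insert.hyps by (auto simp: poly_prod)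
  moreover have "poly T a = 0" using insert.prems by auto
  ultimately have "poly Q a = 0" using Q by simp
  then have "[:-a,1:] dvd Q" by (simp add: poly_eq_0_iff_dvd)
  then obtain Q2 where "Q = [:-a,1:] * Q2" by (auto simp: dvd_def)
  moreover have "(\<Prod>s\<in>insert a S. [:-s,1:]) = [:-a,1:] * (\<Prod>s\<in>S. [:-s,1::real:])"
    using insert.hyps by (rule prod.insert)
  ultimately have "T = (\<Prod>s\<in>insert a S. [:-s,1:]) * Q2"
    using Q by (simp only: ac_simps)
  then show ?case by simp
qed

lemma monic_lin_prod:
  assumes "finite S"
  shows "degree (\<Prod>s\<in>S. [:-s,1::real:]) = card S \<and> coeff (\<Prod>s\<in>S. [:-s,1::real:]) (card S) = 1
     \<and> (\<Prod>s\<in>S. [:-s,1::real:]) \<noteq> 0"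
proof -
  have d: "degree (\<Prod>s\<in>S. [:-s,1::real:]) = card S"
    using assms by (simp add: degree_prod_eq_sum_degree)
  have "lead_coeff (\<Prod>s\<in>S. [:-s,1::real:]) = 1" by (simp add: lead_coeff_prod)
  with d show ?thesis by auto
qed

lemma lagrange_sum:
  fixes T g :: "real poly" and S :: "real set"
  assumes fin: "finite S" and cardS: "card S = degree T" and roots: "\<forall>r\<in>S. poly T r = 0"
    and deg: "g = 0 \<or> degree g + 2 \<le> degree T"
  shows "(\<Sum>r\<in>S. poly g r / poly (pderiv T) r) = 0"
proof (cases "g = 0")
  case True then show ?thesis by simp
next
  case False
  with deg have dg: "degree g + 2 \<le> degree T" by auto
  define N where "N = card S"
  have N2: "N \<ge> 2" using dg cardS N_def by auto
  have T0: "T \<noteq> 0" using dg by auto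
  define W where "W r = (\<Prod>s\<in>S-{r}. [:-s,1::real:])" for r
  define w where "w r = poly (W r) r" for r
  have wnz: "w r \<noteq> 0" if "r \<in> S" for r
    using fin by (auto simp: w_def W_def poly_prod)
  have degW: "degree (W r) = N - 1" and lcW: "coeff (W r) (N-1) = 1" if "r \<in> S" for r
    using monic_lin_prod[of "S-{r}"] fin that by (auto simp: W_def N_def card_Diff_singleton)
  obtain Q where Q: "T = (\<Prod>s\<in>S. [:-s,1:]) * Q"
    using prod_lin_dvd[OF fin roots] by (auto simp: dvd_def)
  have Q0: "Q \<noteq> 0" using Q T0 by auto
  have "degree T = N + degree Q"
    using Q Q0 monic_lin_prod[OF fin] by (simp add: degree_mult_eq N_def)
  then have "degree Q = 0" using cardS N_def by simp
  then obtain l where l: "Q = [:l:]" by (metis degree_eq_zeroE)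
  have l0: "l \<noteq> 0" using Q0 l by simp
  have Tr: "T = smult l ([:-r,1:] * W r)" if "r \<in> S" for r
    using Q l that fin by (simp add: W_def prod.remove mult.commute)
  have dT: "poly (pderiv T) r = l * w r" if "r \<in> S" for r
    using Tr[OF that] by (simp only: pderiv_smult pderiv_mult poly_smult poly_add poly_mult) (simp add: pderiv_pCons w_def)
  define P where "P = (\<Sum>r\<in>S. smult (poly g r / w r) (W r))"
  have Pt: "poly P t = poly g t" if "t \<in> S" for t
  proof -
    have "poly P t = (\<Sum>r\<in>S. poly g r / w r * poly (W r) t)"
      by (simp add: P_def poly_sum)
    also have "\<dots> = poly g t / w t * poly (W t) t + (\<Sum>r\<in>S-{t}. poly g r / w r * poly (W r) t)"
      using fin that by (simp add: sum.remove)
    also have "(\<Sum>r\<in>S-{t}. poly g r / w r * poly (W r) t) = 0"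
      using fin that by (intro sum.neutral) (auto simp: W_def poly_prod)
    finally show ?thesis using wnz[OF that] by (simp add: w_def)
  qed
  have degP: "degree P \<le> N - 1"
    unfolding P_def by (rule degree_sum_le) (use fin degW in \<open>auto intro: order.trans[OF degree_smult_le]\<close>)
  have "P - g = 0"
  proof (rule ccontr)
    assume ne: "P - g \<noteq> 0"
    have "S \<subseteq> {x. poly (P - g) x = 0}" using Pt by auto
    then have "N \<le> card {x. poly (P - g) x = 0}"
      using card_mono[OF poly_roots_finite[OF ne]] N_def by auto
    also have "\<dots> \<le> degree (P - g)" by (rule card_poly_roots_bound[OF ne])
    also have "\<dots> \<le> N - 1" using degree_diff_le[of P "N-1" g] degP dg cardS N_def by auto
    finally show False using N2 by simp
  qed
  then have "coeff P (N-1) = coeff g (N-1)" by (metis coeff_diff eq_iff_diff_eq_0)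
  also have "coeff g (N-1) = 0" using dg cardS N_def by (intro coeff_eq_0) auto
  finally have "(\<Sum>r\<in>S. poly g r / w r) = 0"
    using lcW by (simp add: P_def coeff_sum)
  then have "(\<Sum>r\<in>S. poly g r / w r) / l = 0" by simp
  moreover have "(\<Sum>r\<in>S. poly g r / poly (pderiv T) r) = (\<Sum>r\<in>S. poly g r / w r) / l"
    by (simp add: dT sum_divide_distrib mult.commute)
  ultimately show ?thesis by simp
qed


lemma lin_prod_at:
  assumes "finite A" "r \<in> A"
  shows "poly (\<Prod>s\<in>A. [:-s,1::real:]) r = 0"
    and "poly (pderiv (\<Prod>s\<in>A. [:-s,1::real:])) r \<noteq> 0"
proof -
  have eq: "(\<Prod>s\<in>A. [:-s,1::real:]) = [:-r,1:] * (\<Prod>s\<in>A-{r}. [:-s,1::real:])"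
    using assms by (simp add: prod.remove)
  show "poly (\<Prod>s\<in>A. [:-s,1::real:]) r = 0" by (subst eq) (simp only: poly_mult, simp)
  have "poly (pderiv (\<Prod>s\<in>A. [:-s,1::real:])) r = poly (\<Prod>s\<in>A-{r}. [:-s,1::real:]) r"
    by (subst eq) (simp only: pderiv_mult poly_add poly_mult, simp add: pderiv_pCons)
  also have "\<dots> \<noteq> 0" using assms by (auto simp: poly_prod)
  finally show "poly (pderiv (\<Prod>s\<in>A. [:-s,1::real:])) r \<noteq> 0" .
qed

lemma lin_prod_notin:
  assumes "finite A" "r \<notin> A"
  shows "poly (\<Prod>s\<in>A. [:-s,1::real:]) r \<noteq> 0"
  using assms by (auto simp: poly_prod)

lemma E_derivs:
  fixes a b :: "real poly"
  assumes F: "F = (\<lambda>(x1,x2). x1^3 + x1 * poly a x2 + poly b x2)"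
  shows "pd1 F = (\<lambda>p. 3*(fst p)^2 + poly a (snd p))"
    and "pd2 F = (\<lambda>p. fst p * poly (pderiv a) (snd p) + poly (pderiv b) (snd p))"
    and "pd1 (pd1 F) = (\<lambda>p. 6 * fst p)"
    and "pd2 (pd2 F) = (\<lambda>p. fst p * poly (pderiv (pderiv a)) (snd p) + poly (pderiv (pderiv b)) (snd p))"
    and "pd2 (pd1 F) = (\<lambda>p. poly (pderiv a) (snd p))"
    and "pd1 (pd2 F) = (\<lambda>p. poly (pderiv a) (snd p))"
proof -
  show 1: "pd1 F = (\<lambda>p. 3*(fst p)^2 + poly a (snd p))"
    unfolding pd1_def F
    by (rule ext, rule DERIV_imp_deriv) (auto intro!: derivative_eq_intros)
  show 2: "pd2 F = (\<lambda>p. fst p * poly (pderiv a) (snd p) + poly (pderiv b) (snd p))"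
    unfolding pd2_def F
    by (rule ext, rule DERIV_imp_deriv) (auto intro!: derivative_eq_intros poly_DERIV[THEN DERIV_chain2])
  show "pd1 (pd1 F) = (\<lambda>p. 6 * fst p)"
    unfolding 1 pd1_def
    by (rule ext, rule DERIV_imp_deriv) (auto intro!: derivative_eq_intros)
  show "pd2 (pd2 F) = (\<lambda>p. fst p * poly (pderiv (pderiv a)) (snd p) + poly (pderiv (pderiv b)) (snd p))"
    unfolding 2 pd2_def
    by (rule ext, rule DERIV_imp_deriv) (auto intro!: derivative_eq_intros poly_DERIV[THEN DERIV_chain2])
  show "pd2 (pd1 F) = (\<lambda>p. poly (pderiv a) (snd p))"
    unfolding 1 pd2_def
    by (rule ext, rule DERIV_imp_deriv) (auto intro!: derivative_eq_intros poly_DERIV[THEN DERIV_chain2])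
  show "pd1 (pd2 F) = (\<lambda>p. poly (pderiv a) (snd p))"
    unfolding 2 pd1_def
    by (rule ext, rule DERIV_imp_deriv) (auto intro!: derivative_eq_intros)
qed

lemma E_general:
  fixes a b :: "real poly" and F :: "real \<times> real \<Rightarrow> real"
  assumes F: "F = (\<lambda>(x1,x2). x1^3 + x1 * poly a x2 + poly b x2)"
    and degR: "degree (smult 3 (pderiv b * pderiv b) + a * pderiv a * pderiv a) = n"
    and dega: "degree (pderiv a) + 2 \<le> n"
    and fin: "finite (crit_points F)" and card: "card (crit_points F) = n"
    and nd: "\<forall>p\<in>crit_points F. hess_det F p \<noteq> 0"
  shows "(\<Sum>p\<in>crit_points F. magnification F p) = 0"
proof -
  note dd = E_derivs[OF F]
  define a1 where "a1 = pderiv a"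
  define a2 where "a2 = pderiv a1"
  define b1 where "b1 = pderiv b"
  define b2 where "b2 = pderiv b1"
  define R where "R = smult 3 (b1 * b1) + a * a1 * a1"
  define C where "C = crit_points F"
  have Cdef: "(u,v) \<in> C \<longleftrightarrow> 3*u^2 + poly a v = 0 \<and> u * poly a1 v + poly b1 v = 0" for u v
    by (simp add: C_def crit_points_def dd a1_def b1_def)
  have hd: "hess_det F (u,v) = 6*u*(u * poly a2 v + poly b2 v) - (poly a1 v)^2" for u v
    unfolding hess_det_def dd(3-6) by (simp add: a1_def a2_def b1_def b2_def power2_eq_square)
  have ndC: "6*u*(u * poly a2 v + poly b2 v) - (poly a1 v)^2 \<noteq> 0" if "(u,v) \<in> C" for u v
    using nd that hd by (auto simp: C_def)
  have R1: "poly (pderiv R) r = 6*poly b1 r*poly b2 r + (poly a1 r)^3 + 2*poly a r*poly a1 r*poly a2 r" for r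
    by (simp add: R_def pderiv_add pderiv_mult pderiv_smult a1_def[symmetric] a2_def[symmetric]
        b2_def[symmetric] algebra_simps power3_eq_cube)
  have R2: "poly (pderiv (pderiv R)) r = 6*(poly b2 r)^2 + 2*poly a r*(poly a2 r)^2"
    if "poly a1 r = 0" "poly b1 r = 0" for r
    using that
    by (simp add: R_def pderiv_add pderiv_mult pderiv_smult a1_def[symmetric] a2_def[symmetric]
        b2_def[symmetric] algebra_simps power2_eq_square)
  have Rzero: "poly R v = 0" if "(u,v) \<in> C" for u v
  proof -
    have "poly b1 v = - u * poly a1 v" "poly a v = -3*u^2" using that Cdef by auto
    then show ?thesis by (simp add: R_def algebra_simps power2_eq_square)
  qed
  define S where "S = snd ` C"
  define Dg where "Dg = {r\<in>S. poly a1 r = 0}"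
  have Sex: "\<exists>u. (u,r) \<in> C" if "r \<in> S" for r
    using that unfolding S_def by (metis imageE prod.collapse)
  have finS: "finite S" using fin by (simp add: S_def C_def)
  have finDg: "finite Dg" using finS by (simp add: Dg_def)
  have fib1: "{p\<in>C. snd p = r} = {(u,r)}" if ur: "(u,r) \<in> C" and a1r: "poly a1 r \<noteq> 0" for u r
  proof -
    have uniq: "u' = u" if "(u',r) \<in> C" for u'
    proof -
      have "u' * poly a1 r + poly b1 r = 0" "u * poly a1 r + poly b1 r = 0"
        using that ur Cdef by blast+
      then have "u' * poly a1 r = u * poly a1 r" by linarith
      then show ?thesis using a1r by simp
    qed
    show ?thesis
    proof
      show "{p\<in>C. snd p = r} \<subseteq> {(u,r)}"
      proof
        fix p assume "p \<in> {p\<in>C. snd p = r}"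
        then obtain x where "p = (x,r)" "(x,r)\<in>C" by (cases p) auto
        then show "p \<in> {(u,r)}" using uniq by blast
      qed
    qed (use ur in auto)
  qed
  have deg_info: "poly b1 r = 0 \<and> u \<noteq> 0 \<and> (-u,r) \<in> C \<and> {p\<in>C. snd p = r} = {(u,r),(-u,r)}"
    if ur: "(u,r) \<in> C" and a10: "poly a1 r = 0" for u r
  proof -
    have au: "3*u^2 + poly a r = 0" "u * poly a1 r + poly b1 r = 0" using ur Cdef by blast+
    have b: "poly b1 r = 0" using au a10 by simp
    have u0: "u \<noteq> 0"
    proof
      assume "u = 0"
      then show False using ndC[OF ur] a10 by simp
    qed
    have m: "(-u,r) \<in> C" unfolding Cdef using au a10 b by simp
    have two: "u' = u \<or> u' = -u" if "(u',r) \<in> C" for u'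
    proof -
      have "3*u'^2 + poly a r = 0" using that Cdef by blast
      then have "u'^2 = u^2" using au by linarith
      then show ?thesis by (simp add: power2_eq_iff)
    qed
    have "{p\<in>C. snd p = r} = {(u,r),(-u,r)}"
    proof
      show "{p\<in>C. snd p = r} \<subseteq> {(u,r),(-u,r)}"
      proof
        fix p assume "p \<in> {p\<in>C. snd p = r}"
        then obtain x where "p = (x,r)" "(x,r)\<in>C" by (cases p) auto
        then show "p \<in> {(u,r),(-u,r)}" using two by blast
      qed
    qed (use ur m in auto)
    then show ?thesis using b u0 m by blast
  qed
  define D where "D = (\<Prod>s\<in>Dg. [:-s,1::real:])"
  have DA: "D dvd a1" unfolding D_def by (rule prod_lin_dvd[OF finDg]) (auto simp: Dg_def)
  have DB: "D dvd b1"
  proof (unfold D_def, rule prod_lin_dvd[OF finDg], intro ballI)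
    fix r assume "r \<in> Dg"
    then obtain u where "(u,r) \<in> C" "poly a1 r = 0" using Sex by (auto simp: Dg_def)
    then show "poly b1 r = 0" using deg_info by blast
  qed
  obtain g1 where g1: "a1 = D * g1" using DA by (auto simp: dvd_def)
  obtain h where h: "b1 = D * h" using DB by (auto simp: dvd_def)
  define T where "T = smult 3 (h * b1) + a * g1 * a1"
  have RDT: "R = D * T"
  proof -
    have e1: "b1 * b1 = D * (h * b1)" by (metis h mult.assoc)
    have e2: "a * a1 * a1 = D * (a * g1 * a1)" by (metis g1 mult.assoc mult.left_commute)
    show ?thesis unfolding R_def T_def e1 e2 by (simp add: distrib_left mult_smult_right)
  qed
  have D0: "D \<noteq> 0" and degD: "degree D = card Dg"
    using monic_lin_prod[OF finDg] by (auto simp: D_def)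
  have degRn: "degree R = n" using degR by (simp add: R_def a1_def b1_def)
  have R0: "R \<noteq> 0" using degRn dega by auto
  have T0: "T \<noteq> 0" using R0 RDT by auto
  have degT: "degree T = n - card Dg" using degRn RDT D0 T0 degD by (simp add: degree_mult_eq)
  have cardfib: "card {p\<in>C. snd p = r} = (if r \<in> Dg then 2 else 1)" if rS: "r \<in> S" for r
  proof -
    obtain u where u: "(u,r) \<in> C" using Sex[OF rS] by blast
    show ?thesis
    proof (cases "poly a1 r = 0")
      case True
      then have "r \<in> Dg" using rS by (simp add: Dg_def)
      then show ?thesis using deg_info[OF u True] by auto
    next
      case False
      then have "r \<notin> Dg" by (simp add: Dg_def)
      then show ?thesis using fib1[OF u False] by auto
    qed
  qed
  have "card C = (\<Sum>p\<in>C. 1::nat)" by simp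
  also have "\<dots> = (\<Sum>r\<in>S. \<Sum>p\<in>{p\<in>C. snd p = r}. 1)"
    unfolding S_def by (rule sum.image_gen) (use fin in \<open>simp add: C_def\<close>)
  also have "\<dots> = (\<Sum>r\<in>S. (if r \<in> Dg then 2 else 1))" using cardfib by (intro sum.cong) auto
  also have "\<dots> = (\<Sum>r\<in>S. 1 + (if r \<in> Dg then 1 else 0))" by (intro sum.cong) auto
  also have "\<dots> = (\<Sum>r\<in>S. 1) + (\<Sum>r\<in>S. (if r \<in> Dg then 1 else 0))"
    by (rule sum.distrib)
  also have "(\<Sum>r\<in>S. (if r \<in> Dg then 1 else (0::nat))) = card Dg"
    using finS by (simp add: sum.inter_filter[symmetric] Dg_def)
  also have "(\<Sum>r\<in>S. (1::nat)) = card S" by simp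
  finally have cardCS: "card C = card S + card Dg" .
  have cardST: "card S = degree T" using cardCS card degT by (simp add: C_def)
  have dg1: "g1 = 0 \<or> degree g1 + 2 \<le> degree T"
  proof (cases "g1 = 0")
    case False
    then have "degree a1 = card Dg + degree g1" using g1 D0 degD by (simp add: degree_mult_eq)
    then have "degree g1 + 2 \<le> n - card Dg" using dega by (simp add: a1_def)
    then show ?thesis using degT by simp
  qed simp
  have DT1: "poly (pderiv R) r = poly D r * poly (pderiv T) r + poly (pderiv D) r * poly T r" for r
    by (simp add: RDT pderiv_mult)
  have rootsT: "\<forall>r\<in>S. poly T r = 0"
  proof
    fix r assume r: "r \<in> S"
    then obtain u where u: "(u,r) \<in> C" using Sex by blast
    show "poly T r = 0"
    proof (cases "r \<in> Dg")
      case False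
      have "poly D r \<noteq> 0" unfolding D_def by (rule lin_prod_notin[OF finDg False])
      moreover have "poly R r = 0" by (rule Rzero[OF u])
      ultimately show ?thesis by (simp add: RDT)
    next
      case True
      then have a10: "poly a1 r = 0" by (simp add: Dg_def)
      then have b10: "poly b1 r = 0" using deg_info[OF u] by blast
      have "poly (pderiv R) r = 0" using a10 b10 by (simp add: R1)
      moreover have "poly D r = 0" "poly (pderiv D) r \<noteq> 0"
        using lin_prod_at[OF finDg True] by (simp_all add: D_def)
      ultimately show ?thesis using DT1[of r] by simp
    qed
  qed
  have lag: "(\<Sum>r\<in>S. poly g1 r / poly (pderiv T) r) = 0"
    by (rule lagrange_sum[OF finS cardST rootsT dg1])
  have fibsum: "(\<Sum>p\<in>{p\<in>C. snd p = r}. magnification F p) = - (poly g1 r / poly (pderiv T) r)"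
    if r: "r \<in> S" for r
  proof -
    obtain u where u: "(u,r) \<in> C" using Sex[OF r] by blast
    have Tr: "poly T r = 0" using rootsT r by auto
    show ?thesis
    proof (cases "r \<in> Dg")
      case False
      then have a1nz: "poly a1 r \<noteq> 0" using r by (simp add: Dg_def)
      have Dnz: "poly D r \<noteq> 0" unfolding D_def by (rule lin_prod_notin[OF finDg False])
      have b1e: "poly b1 r = - u * poly a1 r" and ae: "poly a r = -3*u^2" using u Cdef by auto
      define det where "det = 6*u*(u * poly a2 r + poly b2 r) - (poly a1 r)^2"
      have detnz: "det \<noteq> 0" using ndC[OF u] by (simp add: det_def)
      have "poly (pderiv R) r = - poly a1 r * det"
        by (simp add: R1 b1e ae det_def algebra_simps power2_eq_square power3_eq_cube)
      moreover have "poly (pderiv R) r = poly D r * poly (pderiv T) r" using DT1[of r] Tr by simp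
      moreover have "poly a1 r = poly D r * poly g1 r" by (simp add: g1)
      ultimately have "poly D r * poly (pderiv T) r = - (poly D r * poly g1 r) * det" by simp
      then have "poly D r * poly (pderiv T) r = poly D r * (- poly g1 r * det)" by simp
      then have eq: "poly (pderiv T) r = - poly g1 r * det" using Dnz mult_left_cancel by blast
      have g1nz: "poly g1 r \<noteq> 0" using a1nz g1 by auto
      have "(\<Sum>p\<in>{p\<in>C. snd p = r}. magnification F p) = 1 / det"
        using fib1[OF u a1nz] by (simp add: magnification_def hd det_def)
      also have "\<dots> = - (poly g1 r / poly (pderiv T) r)" using eq detnz g1nz by (simp add: field_simps)
      finally show ?thesis .
    next
      case True
      then have a10: "poly a1 r = 0" by (simp add: Dg_def)
      obtain b10: "poly b1 r = 0" and u0: "u \<noteq> 0" and fib: "{p\<in>C. snd p = r} = {(u,r),(-u,r)}"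
        and mu: "(-u,r) \<in> C"
        using deg_info[OF u a10] by blast
      have ae: "poly a r = -3*u^2" using u Cdef by auto
      define d1 where "d1 = 6*u*(u * poly a2 r + poly b2 r)"
      define d2 where "d2 = 6*(-u)*((-u) * poly a2 r + poly b2 r)"
      have d1nz: "d1 \<noteq> 0" using ndC[OF u] a10 by (simp add: d1_def)
      have d2nz: "d2 \<noteq> 0" using ndC[OF mu] a10 by (simp add: d2_def)
      have RR: "poly (pderiv (pderiv R)) r = 6*(poly b2 r)^2 - 6*u^2*(poly a2 r)^2"
        using R2[OF a10 b10] ae by simp
      have prod: "d1 * d2 = - 6*u^2 * poly (pderiv (pderiv R)) r"
        by (simp add: RR d1_def d2_def algebra_simps power2_eq_square)
      have sumd: "d1 + d2 = 12*u^2*poly a2 r" by (simp add: d1_def d2_def algebra_simps power2_eq_square)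
      have Dr: "poly D r = 0" and D'r: "poly (pderiv D) r \<noteq> 0"
        using lin_prod_at[OF finDg True] by (simp_all add: D_def)
      have R''DT: "poly (pderiv (pderiv R)) r = 2 * poly (pderiv D) r * poly (pderiv T) r"
        using Dr Tr by (simp add: RDT pderiv_mult pderiv_add algebra_simps)
      have a2e: "poly a2 r = poly (pderiv D) r * poly g1 r"
        using Dr by (simp add: a2_def g1 pderiv_mult)
      have R''nz: "poly (pderiv (pderiv R)) r \<noteq> 0" using prod d1nz d2nz u0 by auto
      have T'nz: "poly (pderiv T) r \<noteq> 0" using R''nz R''DT by auto
      have "(\<Sum>p\<in>{p\<in>C. snd p = r}. magnification F p) = 1/d1 + 1/d2"
        using u0 a10 by (simp add: fib magnification_def hd d1_def d2_def)
      also have "\<dots> = (d1 + d2) / (d1 * d2)" using d1nz d2nz by (simp add: field_simps)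
      also have "\<dots> = - 2 * poly a2 r / poly (pderiv (pderiv R)) r"
        unfolding sumd prod using u0 R''nz by (simp add: field_simps)
      also have "\<dots> = - (poly g1 r / poly (pderiv T) r)"
        unfolding R''DT a2e using D'r T'nz by (simp add: field_simps)
      finally show ?thesis .
    qed
  qed
  have "(\<Sum>p\<in>C. magnification F p) = (\<Sum>r\<in>S. \<Sum>p\<in>{p\<in>C. snd p = r}. magnification F p)"
    unfolding S_def by (rule sum.image_gen) (use fin in \<open>simp add: C_def\<close>)
  also have "\<dots> = (\<Sum>r\<in>S. - (poly g1 r / poly (pderiv T) r))" using fibsum by (intro sum.cong) auto
  also have "\<dots> = 0" using lag by (simp add: sum_negf)
  finally show ?thesis by (simp add: C_def)
qed


lemma E6_case:
  assumes e: "e \<in> {1,-1::real}" and F: "F = E6_family e c s1 s2"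
    and "finite (crit_points F)" "card (crit_points F) = 6"
    and "\<forall>p\<in>crit_points F. hess_det F p \<noteq> 0"
  shows "(\<Sum>p\<in>crit_points F. magnification F p) = 0"
proof (rule E_general[of F "[:-s1, c 1, c 3:]" "[:0, -s2, c 2, 0, e:]" 6])
  show "F = (\<lambda>(x1,x2). x1^3 + x1 * poly [:-s1, c 1, c 3:] x2 + poly [:0, -s2, c 2, 0, e:] x2)"
    unfolding F E6_family_def by (auto simp: fun_eq_iff; algebra)
  show "degree (smult 3 (pderiv [:0, -s2, c 2, 0, e:] * pderiv [:0, -s2, c 2, 0, e:]) +
      [:-s1, c 1, c 3:] * pderiv [:-s1, c 1, c 3:] * pderiv [:-s1, c 1, c 3:]) = 6"
    using e by (auto simp: pderiv_pCons)
  show "degree (pderiv [:-s1, c 1, c 3:]) + 2 \<le> 6" by (simp add: pderiv_pCons)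
qed (use assms in auto)

lemma E7_case:
  assumes F: "F = E7_family c s1 s2"
    and "finite (crit_points F)" "card (crit_points F) = 7"
    and "\<forall>p\<in>crit_points F. hess_det F p \<noteq> 0"
  shows "(\<Sum>p\<in>crit_points F. magnification F p) = 0"
proof (rule E_general[of F "[:-s1, c 1, 0, 1:]" "[:0, -s2, c 2, c 3, c 4:]" 7])
  show "F = (\<lambda>(x1,x2). x1^3 + x1 * poly [:-s1, c 1, 0, 1:] x2 + poly [:0, -s2, c 2, c 3, c 4:] x2)"
    unfolding F E7_family_def by (auto simp: fun_eq_iff; algebra)
  show "degree (smult 3 (pderiv [:0, -s2, c 2, c 3, c 4:] * pderiv [:0, -s2, c 2, c 3, c 4:]) +
      [:-s1, c 1, 0, 1:] * pderiv [:-s1, c 1, 0, 1:] * pderiv [:-s1, c 1, 0, 1:]) = 7"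
    by (auto simp: pderiv_pCons)
  show "degree (pderiv [:-s1, c 1, 0, 1:]) + 2 \<le> 7" by (simp add: pderiv_pCons)
qed (use assms in auto)

lemma E8_case:
  assumes F: "F = E8_family c s1 s2"
    and "finite (crit_points F)" "card (crit_points F) = 8"
    and "\<forall>p\<in>crit_points F. hess_det F p \<noteq> 0"
  shows "(\<Sum>p\<in>crit_points F. magnification F p) = 0"
proof (rule E_general[of F "[:-s1, c 1, c 4, c 5:]" "[:0, -s2, c 2, c 3, 0, 1:]" 8])
  show "F = (\<lambda>(x1,x2). x1^3 + x1 * poly [:-s1, c 1, c 4, c 5:] x2 + poly [:0, -s2, c 2, c 3, 0, 1:] x2)"
    unfolding F E8_family_def by (auto simp: fun_eq_iff; algebra)
  show "degree (smult 3 (pderiv [:0, -s2, c 2, c 3, 0, 1:] * pderiv [:0, -s2, c 2, c 3, 0, 1:]) +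
      [:-s1, c 1, c 4, c 5:] * pderiv [:-s1, c 1, c 4, c 5:] * pderiv [:-s1, c 1, c 4, c 5:]) = 8"
    by (auto simp: pderiv_pCons)
  show "degree (pderiv [:-s1, c 1, c 4, c 5:]) + 2 \<le> 8" by (simp add: pderiv_pCons)
qed (use assms in auto)


lemma degree_eqI':
  fixes p :: "real poly"
  assumes "coeff p n \<noteq> 0" "\<And>k. k > n \<Longrightarrow> coeff p k = 0"
  shows "degree p = n"
  using assms by (meson degree_le le_antisym le_degree)

lemma sep_general:
  fixes P :: "real poly" and F :: "real \<times> real \<Rightarrow> real"
  assumes F: "F = (\<lambda>(x1,x2). poly P x1 + e2 * x2^2 + \<beta> * x2)" and e2: "e2 \<noteq> 0"
    and degP: "degree (pderiv P) = n" and n2: "n \<ge> 2"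
    and fin: "finite (crit_points F)" and card: "card (crit_points F) = n"
    and nd: "\<forall>p\<in>crit_points F. hess_det F p \<noteq> 0"
  shows "(\<Sum>p\<in>crit_points F. magnification F p) = 0"
proof -
  have d1: "pd1 F = (\<lambda>p. poly (pderiv P) (fst p))"
    unfolding pd1_def F
    by (rule ext, rule DERIV_imp_deriv) (auto intro!: derivative_eq_intros poly_DERIV[THEN DERIV_chain2])
  have d2: "pd2 F = (\<lambda>p. 2 * e2 * snd p + \<beta>)"
    unfolding pd2_def F
    by (rule ext, rule DERIV_imp_deriv) (auto intro!: derivative_eq_intros)
  have d11: "pd1 (pd1 F) = (\<lambda>p. poly (pderiv (pderiv P)) (fst p))"
    unfolding d1 pd1_def
    by (rule ext, rule DERIV_imp_deriv) (auto intro!: derivative_eq_intros poly_DERIV[THEN DERIV_chain2])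
  have d22: "pd2 (pd2 F) = (\<lambda>p. 2 * e2)"
    unfolding d2 pd2_def
    by (rule ext, rule DERIV_imp_deriv) (auto intro!: derivative_eq_intros)
  have d21: "pd2 (pd1 F) = (\<lambda>p. 0)"
    unfolding d1 pd2_def by (rule ext) simp
  have d12: "pd1 (pd2 F) = (\<lambda>p. 0)"
    unfolding d2 pd1_def by (rule ext) simp
  define C where "C = crit_points F"
  define v0 where "v0 = - \<beta> / (2 * e2)"
  have Cdef: "(u,v) \<in> C \<longleftrightarrow> poly (pderiv P) u = 0 \<and> v = v0" for u v
    using e2 by (auto simp: C_def crit_points_def d1 d2 v0_def field_simps)
  have hd: "hess_det F p = poly (pderiv (pderiv P)) (fst p) * (2 * e2)" for p
    unfolding hess_det_def d11 d22 d21 d12 by simp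
  define S where "S = fst ` C"
  have inj: "inj_on fst C"
    by (rule inj_onI) (metis Cdef prod.collapse)
  have finS: "finite S" using fin by (simp add: S_def C_def)
  have cardS: "card S = degree (pderiv P)"
    using card_image[OF inj] card degP by (simp add: S_def C_def)
  have rootsS: "\<forall>r\<in>S. poly (pderiv P) r = 0"
    unfolding S_def using Cdef by force
  have lag: "(\<Sum>r\<in>S. poly 1 r / poly (pderiv (pderiv P)) r) = 0"
    by (rule lagrange_sum[OF finS cardS rootsS]) (use degP n2 in simp)
  have "(\<Sum>p\<in>C. magnification F p) = (\<Sum>r\<in>S. 1 / (poly (pderiv (pderiv P)) r * (2 * e2)))"
    unfolding S_def by (simp add: sum.reindex[OF inj] magnification_def hd)
  also have "\<dots> = (\<Sum>r\<in>S. poly 1 r / poly (pderiv (pderiv P)) r) / (2 * e2)"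
    by (simp add: sum_divide_distrib)
  also have "\<dots> = 0" using lag by simp
  finally show ?thesis by (simp add: C_def)
qed

definition PA :: "nat \<Rightarrow> real \<Rightarrow> (nat \<Rightarrow> real) \<Rightarrow> real \<Rightarrow> real \<Rightarrow> real poly" where
  "PA n e1 c s1 s2 = monom e1 (n+1) + (\<Sum>k\<in>{3..n-1}. monom (c k) k) + monom s2 2 + monom (-s1) 1"

lemma PA_poly: "poly (PA n e1 c s1 s2) x = e1 * x^(n+1) + (\<Sum>k = 3..n-1. c k * x^k) + s2 * x^2 - s1 * x"
  by (simp add: PA_def poly_sum poly_monom)

lemma PA_degree:
  assumes "e1 \<noteq> 0" "n \<ge> 2"
  shows "degree (pderiv (PA n e1 c s1 s2)) = n"
proof -
  have "degree (PA n e1 c s1 s2) = n + 1"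
  proof (rule degree_eqI')
    have "coeff (\<Sum>k\<in>{3..n-1}. monom (c k) k) (n+1) = 0"
      by (subst coeff_sum, rule sum.neutral) (auto simp: coeff_monom)
    then show "coeff (PA n e1 c s1 s2) (n + 1) \<noteq> 0" using assms by (simp add: PA_def)
  next
    fix k assume "n + 1 < k"
    moreover have "coeff (\<Sum>j\<in>{3..n-1}. monom (c j) j) k = 0"
      by (subst coeff_sum, rule sum.neutral) (use \<open>n + 1 < k\<close> in \<open>auto simp: coeff_monom\<close>)
    ultimately show "coeff (PA n e1 c s1 s2) k = 0" using assms by (simp add: PA_def)
  qed
  then show ?thesis by (simp add: degree_pderiv)
qed

lemma A_case:
  assumes n: "n \<ge> 2" and e: "e1 \<in> {1,-1}" "e2 \<in> {1,-1::real}"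
    and F: "F = A_family n e1 e2 e3 c s1 s2"
    and "finite (crit_points F)" "card (crit_points F) = n"
    and "\<forall>p\<in>crit_points F. hess_det F p \<noteq> 0"
  shows "(\<Sum>p\<in>crit_points F. magnification F p) = 0"
proof (rule sep_general[of F "PA n e1 c s1 s2" e2 "e3 * s2" n])
  show "F = (\<lambda>(x1,x2). poly (PA n e1 c s1 s2) x1 + e2 * x2^2 + e3 * s2 * x2)"
    unfolding F A_family_def PA_poly by (auto simp: fun_eq_iff)
  show "degree (pderiv (PA n e1 c s1 s2)) = n" using e n by (intro PA_degree) auto
qed (use assms in auto)


lemma D_general:
  fixes Q :: "real poly" and F :: "real \<times> real \<Rightarrow> real"
  assumes F: "F = (\<lambda>(x1,x2). x1^2 * x2 + poly Q x2 - s1 * x1)"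
    and degQ: "degree Q = n - 1" and n4: "n \<ge> 4"
    and fin: "finite (crit_points F)" and card: "card (crit_points F) = n"
    and nd: "\<forall>p\<in>crit_points F. hess_det F p \<noteq> 0"
  shows "(\<Sum>p\<in>crit_points F. magnification F p) = 0"
proof -
  define Q1 where "Q1 = pderiv Q"
  define Q2 where "Q2 = pderiv Q1"
  have d1: "pd1 F = (\<lambda>p. 2 * fst p * snd p - s1)"
    unfolding pd1_def F
    by (rule ext, rule DERIV_imp_deriv) (auto intro!: derivative_eq_intros)
  have d2: "pd2 F = (\<lambda>p. (fst p)^2 + poly Q1 (snd p))"
    unfolding pd2_def F Q1_def
    by (rule ext, rule DERIV_imp_deriv) (auto intro!: derivative_eq_intros poly_DERIV[THEN DERIV_chain2])
  have d11: "pd1 (pd1 F) = (\<lambda>p. 2 * snd p)"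
    unfolding d1 pd1_def
    by (rule ext, rule DERIV_imp_deriv) (auto intro!: derivative_eq_intros)
  have d22: "pd2 (pd2 F) = (\<lambda>p. poly Q2 (snd p))"
    unfolding d2 pd2_def Q2_def
    by (rule ext, rule DERIV_imp_deriv) (auto intro!: derivative_eq_intros poly_DERIV[THEN DERIV_chain2])
  have d21: "pd2 (pd1 F) = (\<lambda>p. 2 * fst p)"
    unfolding d1 pd2_def
    by (rule ext, rule DERIV_imp_deriv) (auto intro!: derivative_eq_intros)
  have d12: "pd1 (pd2 F) = (\<lambda>p. 2 * fst p)"
    unfolding d2 pd1_def
    by (rule ext, rule DERIV_imp_deriv) (auto intro!: derivative_eq_intros)
  define C where "C = crit_points F"
  have Cdef: "(u,v) \<in> C \<longleftrightarrow> 2 * u * v = s1 \<and> u^2 + poly Q1 v = 0" for u v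
    by (auto simp: C_def crit_points_def d1 d2)
  have hd: "hess_det F (u,v) = 2 * v * poly Q2 v - 4 * u^2" for u v
    unfolding hess_det_def d11 d22 d21 d12 by (simp add: power2_eq_square)
  have ndC: "2 * v * poly Q2 v - 4 * u^2 \<noteq> 0" if "(u,v) \<in> C" for u v
    using nd that hd by (auto simp: C_def)
  have finC: "finite C" using fin by (simp add: C_def)
  have cardC: "card C = n" using card by (simp add: C_def)
  have Q10: "Q1 \<noteq> 0" and degQ1: "degree Q1 = n - 2"
    using degQ n4 by (auto simp: Q1_def degree_pderiv dest: arg_cong[of _ _ degree])
  have sumC: "(\<Sum>p\<in>C. magnification F p) = 0"
  proof (cases "s1 = 0")
    case False
    define P where "P = [:s1^2:] + smult 4 ([:0,0,1:] * Q1)"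
    have v0: "v \<noteq> 0" if "(u,v) \<in> C" for u v using that Cdef False by auto
    have Pv: "poly P v = 0" if "(u,v) \<in> C" for u v
    proof -
      have "s1 = 2 * u * v" "poly Q1 v = - (u^2)" using that Cdef by auto
      then show ?thesis by (simp add: P_def algebra_simps power2_eq_square)
    qed
    have P'v: "poly (pderiv P) v = 2* v *(2 * v * poly Q2 v - 4 * u^2)" if "(u,v) \<in> C" for u v
    proof -
      have "poly Q1 v = - (u^2)" using that Cdef by auto
      then show ?thesis
        by (simp add: P_def pderiv_add pderiv_smult pderiv_mult pderiv_pCons Q2_def[symmetric]
            algebra_simps power2_eq_square)
    qed
    have inj: "inj_on snd C"
    proof (rule inj_onI)
      fix p q assume "p \<in> C" "q \<in> C" "snd p = snd q"
      then obtain u u' v where pq: "p = (u,v)" "q = (u',v)" "(u,v) \<in> C" "(u',v) \<in> C"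
        by (metis prod.collapse)
      then have "2 * u * v = 2 * u'* v" "v \<noteq> 0" using Cdef v0 by auto
      then show "p = q" using pq by simp
    qed
    define S where "S = snd ` C"
    have degP: "degree P = n"
    proof -
      have "degree (smult 4 ([:0,0,1:] * Q1)) = n"
        using Q10 degQ1 n4 by (simp add: degree_mult_eq)
      moreover have "degree [:s1^2:] < n" using n4 by simp
      ultimately show ?thesis unfolding P_def by (simp add: degree_add_eq_right)
    qed
    have finS: "finite S" using finC by (simp add: S_def)
    have cardS: "card S = degree P" using card_image[OF inj] cardC degP by (simp add: S_def)
    have rootsS: "\<forall>r\<in>S. poly P r = 0" unfolding S_def using Pv by force
    have lag: "(\<Sum>r\<in>S. poly [:0,2:] r / poly (pderiv P) r) = 0"
      by (rule lagrange_sum[OF finS cardS rootsS]) (use degP n4 in simp)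
    have "(\<Sum>r\<in>S. poly [:0,2:] r / poly (pderiv P) r) = (\<Sum>p\<in>C. poly [:0,2:] (snd p) / poly (pderiv P) (snd p))"
      unfolding S_def by (simp add: sum.reindex[OF inj])
    also have "\<dots> = (\<Sum>p\<in>C. magnification F p)"
    proof (rule sum.cong)
      fix p assume "p \<in> C"
      then obtain u v where p: "p = (u,v)" "(u,v) \<in> C" by (metis prod.collapse)
      have "v \<noteq> 0" "2 * v * poly Q2 v - 4 * u^2 \<noteq> 0" using v0 ndC p by auto
      then show "poly [:0,2:] (snd p) / poly (pderiv P) (snd p) = magnification F p"
      proof -
        define d where "d = 2 * v * poly Q2 v - 4 * u^2"
        have "d \<noteq> 0" "v \<noteq> 0" using \<open>v \<noteq> 0\<close> \<open>2 * v * poly Q2 v - 4 * u^2 \<noteq> 0\<close> by (auto simp: d_def)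
        moreover have "poly (pderiv P) v = 2 * v * d" using P'v[OF p(2)] by (simp add: d_def)
        ultimately show ?thesis by (simp add: p magnification_def hd d_def[symmetric])
      qed
    qed simp
    finally show ?thesis using lag by simp
  next
    case True
    define C1 where "C1 = {p\<in>C. fst p = 0}"
    define C2 where "C2 = {p\<in>C. fst p \<noteq> 0}"
    have C1def: "(0,v) \<in> C \<longleftrightarrow> poly Q1 v = 0" for v using Cdef True by simp
    have n00: "(0,0) \<notin> C" using ndC[of 0 0] by auto
    have Q1_0: "poly Q1 0 \<noteq> 0" using C1def n00 by auto
    have C2v: "snd p = 0 \<and> (fst p)^2 = - poly Q1 0" if "p \<in> C2" for p
    proof -
      obtain u v where p: "p = (u,v)" using prod.exhaust by blast
      have "2 * u * v = 0" "u^2 + poly Q1 v = 0" "u \<noteq> 0" using that Cdef True p by (auto simp: C2_def)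
      then show ?thesis using p by auto
    qed
    have finC1: "finite C1" "finite C2" using finC by (auto simp: C1_def C2_def)
    have cardU: "card C = card C1 + card C2"
    proof -
      have "C = C1 \<union> C2" "C1 \<inter> C2 = {}" by (auto simp: C1_def C2_def)
      then show ?thesis using finC1 by (simp add: card_Un_disjoint)
    qed
    have inj1: "inj_on snd C1" by (rule inj_onI) (auto simp: C1_def prod_eq_iff)
    define V where "V = snd ` C1"
    have V_roots: "V \<subseteq> {x. poly Q1 x = 0}"
    proof
      fix v assume "v \<in> V"
      then obtain p where "p \<in> C1" "v = snd p" by (auto simp: V_def)
      then have "(0,v) \<in> C" by (auto simp: C1_def prod_eq_iff) (metis prod.collapse)
      then show "v \<in> {x. poly Q1 x = 0}" using C1def by auto
    qed
    have cardV: "card V = card C1" using card_image[OF inj1] by (simp add: V_def)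
    have "card V \<le> n - 2"
      using card_mono[OF poly_roots_finite[OF Q10] V_roots] card_poly_roots_bound[OF Q10] degQ1 by simp
    have C2sub: "\<exists>w. C2 \<subseteq> {(w,0),(-w,0)}"
    proof -
      define w where "w = sqrt (- poly Q1 0)"
      have "C2 \<subseteq> {(w,0),(-w,0)}"
      proof
        fix p assume "p \<in> C2"
        then have "snd p = 0" "(fst p)^2 = - poly Q1 0" using C2v by auto
        then have "fst p = w \<or> fst p = -w" unfolding w_def
          by (metis abs_of_nonneg abs_of_nonpos linorder_le_cases minus_minus real_sqrt_abs)
        then show "p \<in> {(w,0),(-w,0)}" using \<open>snd p = 0\<close> by (cases p) auto
      qed
      then show ?thesis by blast
    qed
    then obtain w where w: "C2 \<subseteq> {(w,0),(-w,0)}" by blast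
    have c22: "card {(w,0),(-w,0::real)} \<le> 2" by (simp add: card_insert_if)
    have "card C2 \<le> 2"
      using card_mono[OF _ w] c22 by simp
    then have c2: "card C2 = 2" and c1: "card C1 = n - 2"
      using cardU cardC \<open>card V \<le> n - 2\<close> cardV n4 by auto
    have C2eq: "C2 = {(w,0),(-w,0)}" and wnz: "w \<noteq> 0"
    proof -
      have "finite {(w,0),(-w,0::real)}" by simp
      show C2e: "C2 = {(w,0),(-w,0)}"
        using c2 w card_seteq[OF _ w] c22 by fastforce
      show "w \<noteq> 0" using c2 C2e by (auto)
    qed
    have w2: "w^2 = - poly Q1 0" using C2v[of "(w,0)"] C2eq by auto
    have sumC2: "(\<Sum>p\<in>C2. magnification F p) = 1 / (2 * poly Q1 0)"
      using wnz Q1_0 w2 by (simp add: C2eq magnification_def hd field_simps)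
    have sumC1: "(\<Sum>p\<in>C1. magnification F p) = (\<Sum>v\<in>V. 1 / (2 * v * poly Q2 v))"
      unfolding V_def
      by (simp add: sum.reindex[OF inj1])
        (rule sum.cong, auto simp: C1_def magnification_def hd prod_eq_iff)
    define T where "T = [:0,1:] * Q1"
    have V0: "0 \<notin> V" using V_roots Q1_0 by auto
    have finV: "finite V" using finC1 by (simp add: V_def)
    have degT: "degree T = n - 1" using Q10 degQ1 n4 by (simp add: T_def degree_mult_eq)
    have cardT: "card (insert 0 V) = degree T" using V0 finV cardV c1 degT n4 by simp
    have rootsT: "\<forall>r\<in>insert 0 V. poly T r = 0" using V_roots by (auto simp: T_def)
    have lag: "(\<Sum>r\<in>insert 0 V. poly 1 r / poly (pderiv T) r) = 0"
      by (rule lagrange_sum[OF _ cardT rootsT]) (use finV degT n4 in auto)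
    have T': "poly (pderiv T) r = poly Q1 r + r * poly Q2 r" for r
      by (simp add: T_def pderiv_mult pderiv_pCons Q2_def[symmetric])
    have "1 / poly Q1 0 + (\<Sum>v\<in>V. 1 / (v * poly Q2 v)) = 0"
    proof -
      have "(\<Sum>r\<in>V. 1 / (poly Q1 r + r * poly Q2 r)) = (\<Sum>v\<in>V. 1 / (v * poly Q2 v))"
        by (rule sum.cong) (use V_roots in auto)
      then show ?thesis using lag V0 finV by (simp add: T' sum.insert)
    qed
    moreover have "(\<Sum>p\<in>C. magnification F p) = 1 / (2 * poly Q1 0) + (\<Sum>v\<in>V. 1 / (2 * v * poly Q2 v))"
    proof -
      have "C = C1 \<union> C2" "C1 \<inter> C2 = {}" by (auto simp: C1_def C2_def)
      then have "(\<Sum>p\<in>C. magnification F p) = (\<Sum>p\<in>C1. magnification F p) + (\<Sum>p\<in>C2. magnification F p)"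
        using finC1 by (simp add: sum.union_disjoint)
      then show ?thesis using sumC1 sumC2 by simp
    qed
    moreover have "(\<Sum>v\<in>V. 1 / (2 * v * poly Q2 v)) = (\<Sum>v\<in>V. 1 / (v * poly Q2 v)) / 2"
      unfolding sum_divide_distrib by (rule sum.cong) (simp_all add: mult_ac)
    ultimately show ?thesis by simp
  qed
  then show ?thesis by (simp add: C_def)
qed


definition QD :: "nat \<Rightarrow> real \<Rightarrow> (nat \<Rightarrow> real) \<Rightarrow> real \<Rightarrow> real poly" where
  "QD n e c s2 = monom e (n-1) + (\<Sum>k\<in>{2..n-2}. monom (c k) k) + monom (-s2) 1"

lemma QD_poly: "poly (QD n e c s2) x = e * x^(n-1) + (\<Sum>k = 2..n-2. c k * x^k) - s2 * x"
  by (simp add: QD_def poly_sum poly_monom)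

lemma QD_degree:
  assumes "e \<noteq> 0" "n \<ge> 4"
  shows "degree (QD n e c s2) = n - 1"
proof (rule degree_eqI')
  have "coeff (\<Sum>j\<in>{2..n-2}. monom (c j) j) (n-1) = 0"
    by (subst coeff_sum, rule sum.neutral) (use assms in \<open>auto simp: coeff_monom\<close>)
  moreover have "n - 1 \<noteq> 1" using assms by simp
  ultimately show "coeff (QD n e c s2) (n - 1) \<noteq> 0" using assms by (simp add: QD_def)
next
  fix k assume k: "n - 1 < k"
  have "coeff (\<Sum>j\<in>{2..n-2}. monom (c j) j) k = 0"
    by (subst coeff_sum, rule sum.neutral) (use k in \<open>auto simp: coeff_monom\<close>)
  then show "coeff (QD n e c s2) k = 0" using assms k by (simp add: QD_def)
qed

lemma D_case:
  assumes n: "n \<ge> 4" and e: "e \<in> {1,-1::real}"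
    and F: "F = D_family n e c s1 s2"
    and "finite (crit_points F)" "card (crit_points F) = n"
    and "\<forall>p\<in>crit_points F. hess_det F p \<noteq> 0"
  shows "(\<Sum>p\<in>crit_points F. magnification F p) = 0"
proof (rule D_general[of F "QD n e c s2" s1 n])
  show "F = (\<lambda>(x1,x2). x1^2 * x2 + poly (QD n e c s2) x2 - s1 * x1)"
    unfolding F D_family_def QD_poly by (auto simp: fun_eq_iff)
  show "degree (QD n e c s2) = n - 1" using e n by (intro QD_degree) auto
qed (use assms in auto)

theorem theorem9p1:
  fixes F :: "real \<times> real \<Rightarrow> real" and n :: nat
  assumes "ADE_family F n"
    and "finite (crit_points F)" and "card (crit_points F) = n"
    and "\<forall>p \<in> crit_points F. hess_det F p \<noteq> 0"
  shows "(\<Sum>p \<in> crit_points F. magnification F p) = 0"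
  using assms(1) unfolding ADE_family_def
proof (elim disjE exE conjE)
  fix e1 e2 e3 c s1 s2
  assume "2 \<le> n" "e1 \<in> {1, -1}" "e2 \<in> {1, -1}" "e3 \<in> {1, -1}" "F = A_family n e1 e2 e3 c s1 s2"
  then show ?thesis using A_case assms(2-4) by blast
next
  fix e c s1 s2
  assume "4 \<le> n" "e \<in> {1, -1}" "F = D_family n e c s1 s2"
  then show ?thesis using D_case assms(2-4) by blast
next
  fix e c s1 s2
  assume "n = 6" "e \<in> {1, -1}" "F = E6_family e c s1 s2"
  then show ?thesis using E6_case assms(2-4) by blast
next
  fix c s1 s2
  assume "n = 7" "F = E7_family c s1 s2"
  then show ?thesis using E7_case assms(2-4) by blast
next
  fix c s1 s2
  assume "n = 8" "F = E8_family c s1 s2"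
  then show ?thesis using E8_case assms(2-4) by blast
qed

end
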